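(* Let $X$ and $Y$ be nontrivial real Banach spaces. (a) If $X$ is weakly octahedral, then $X\oplus_1 Y$ is weakly octahedral. (b) If $X$ and $Y$ are weakly octahedral and $1<p\leq\infty$, then $X\oplus_p Y$ is weakly octahedral. (c) If $X\oplus_p Y$ is weakly octahedral, where $1<p\leq\infty$, then $X$ is weakly octahedral.
   Context: For $1\le p<\infty$, $X\oplus_p Y$ is $X\times Y$ with norm $(\|x\|^p+\|y\|^p)^{1/p}$; $X\oplus_\infty Y$ has norm $\max\{\|x\|,\|y\|\}$. A Banach space $Z$ is weakly octahedral if for every finite-dimensional subspace $E$ of $Z$, every $z^*\in B_{Z^*}$, and every $\varepsilon>0$, there is a $w\in S_Z$ (unit sphere) such that $\|z+w\|\geq(1-\varepsilon)(|z^*(z)|+\|w\|)$ for all $z\in E$. *)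

theory Defs
  imports "HOL-Analysis.Analysis"
begin

text \<open>The dual unit ball consists of the linear functionals f with |f z| \<le> N z
  (such functionals are automatically bounded, i.e. elements of the dual).
  Finite-dimensional subspaces are spans of finite sets.\<close>
definition weakly_octahedral_wrt :: "('v::real_vector \<Rightarrow> real) \<Rightarrow> bool" where
  "weakly_octahedral_wrt N \<longleftrightarrow>
     (\<forall>E f (\<epsilon>::real).
        subspace E \<and> (\<exists>F. finite F \<and> E = span F) \<and>
        linear f \<and> (\<forall>z. \<bar>f z\<bar> \<le> N z) \<and> \<epsilon> > 0 \<longrightarrow>
        (\<exists>w. N w = 1 \<and> (\<forall>z\<in>E. N (z + w) \<ge> (1 - \<epsilon>) * (\<bar>f z\<bar> + N w))))"

definition psum_norm :: "ereal \<Rightarrow> ('a::real_normed_vector \<times> 'b::real_normed_vector) \<Rightarrow> real" where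
  "psum_norm p z =
     (if p = \<infinity> then max (norm (fst z)) (norm (snd z))
      else (norm (fst z) powr real_of_ereal p + norm (snd z) powr real_of_ereal p)
             powr (1 / real_of_ereal p))"

end

theory Submission
  imports Defs
begin


definition Phi :: "ereal \<Rightarrow> real \<Rightarrow> real \<Rightarrow> real" where
  "Phi p a b = (if p = \<infinity> then max a b
      else (a powr real_of_ereal p + b powr real_of_ereal p) powr (1 / real_of_ereal p))"

lemma psum_Phi: "psum_norm p z = Phi p (norm (fst z)) (norm (snd z))"
  by (simp add: psum_norm_def Phi_def)

lemma fin_ge1: fixes a b r :: real assumes "r > 0" "0 \<le> a" "0 \<le> b"
  shows "a \<le> (a powr r + b powr r) powr (1/r)"
proof -
  have "a = (a powr r) powr (1/r)" using assms by (simp add: powr_powr)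
  also have "\<dots> \<le> (a powr r + b powr r) powr (1/r)"
    using assms by (intro powr_mono2) auto
  finally show ?thesis .
qed

lemma fin_hom: fixes a b r t :: real assumes "r > 0" "0 \<le> a" "0 \<le> b" "0 \<le> t"
  shows "((t*a) powr r + (t*b) powr r) powr (1/r) = t * (a powr r + b powr r) powr (1/r)"
proof -
  have "((t*a) powr r + (t*b) powr r) = t powr r * (a powr r + b powr r)"
    by (simp add: powr_mult algebra_simps)
  then show ?thesis using assms
    by (simp add: powr_mult powr_powr)
qed

lemma fin_mono: fixes a b r :: real assumes "r > 0" "0 \<le> a" "0 \<le> b" "a \<le> a'" "b \<le> b'"
  shows "(a powr r + b powr r) powr (1/r) \<le> (a' powr r + b' powr r) powr (1/r)"
  using assms by (intro powr_mono2 add_mono) auto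

lemma fin_zero: fixes a r :: real assumes "r > 0" "0 \<le> a" shows "(a powr r + 0 powr r) powr (1/r) = a"
  "(0 powr r + a powr r) powr (1/r) = a"
  using assms by (simp_all add: powr_powr)

lemma fin_P: fixes A B K R r :: real assumes r: "r > 1" and K: "K \<ge> 1" and A: "0 \<le> A" and B: "0 \<le> B"
  and RK: "R \<ge> K * B" and ph: "(A powr r + B powr r) powr (1/r) \<ge> R"
  shows "A \<ge> R - K powr (1 - r) * B"
proof (cases "A \<ge> R")
  case True
  have "K powr (1 - r) * B \<ge> 0" using B by simp
  then show ?thesis using True by linarith
next
  case False
  have R0: "R \<ge> 0" using RK K B by (meson mult_nonneg_nonneg order.trans zero_le_one order_trans)
  have Rp: "R > 0" using False A by linarith
  have "R powr r \<le> ((A powr r + B powr r) powr (1/r)) powr r"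
    using R0 ph r by (intro powr_mono2) auto
  also have "\<dots> = A powr r + B powr r" using r by (simp add: powr_powr)
  finally have h1: "R powr r \<le> A powr r + B powr r" .
  have "A powr r = A powr (r-1) * A" using A r
    by (metis powr_add powr_one diff_add_cancel)
  also have "\<dots> \<le> R powr (r-1) * A" using A False r by (intro mult_right_mono powr_mono2) auto
  finally have h2: "A powr r \<le> R powr (r-1) * A" .
  have h3: "R powr r = R powr (r-1) * R" using Rp by (metis powr_add powr_one less_imp_le diff_add_cancel)
  have h4: "R powr (r-1) * (R - A) \<le> B powr r" using h1 h2 h3 by (simp add: algebra_simps)
  show ?thesis
  proof (cases "B = 0")
    case True
    then have "R powr (r-1) * (R - A) \<le> 0" using h4 r by simp
    moreover have "R powr (r-1) > 0" using Rp by simp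
    ultimately have "R - A \<le> 0" by (simp add: mult_le_0_iff)
    then show ?thesis using True by simp
  next
    case Bn: False
    then have Bp: "B > 0" using B by simp
    have "(K*B) powr (r-1) \<le> R powr (r-1)" using RK Bp K r by (intro powr_mono2) auto
    then have h5: "(K*B) powr (r-1) * (R - A) \<le> B powr r"
      using h4 False by (meson diff_ge_0_iff_ge le_less_linear mult_right_mono order.trans less_imp_le)
    have "B powr r = B powr (r-1) * B" using Bp by (metis powr_add powr_one less_imp_le diff_add_cancel)
    then have "K powr (r-1) * B powr (r-1) * (R - A) \<le> B powr (r-1) * B"
      using h5 K Bp by (simp add: powr_mult)
    then have "K powr (r-1) * (R - A) \<le> B" using Bp
      by (simp add: mult.assoc mult.left_commute[of "B powr (r-1)"])
    then have "R - A \<le> B / K powr (r-1)" using K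
      by (simp add: pos_le_divide_eq mult.commute)
    also have "B / K powr (r-1) = K powr (1 - r) * B"
    proof -
      have e: "K powr (1-r) * K powr (r-1) = 1" using K by (simp add: powr_add[symmetric])
      have "K powr (r-1) > 0" using K by simp
      then show ?thesis using e by (simp add: field_simps)
    qed
    finally show ?thesis by simp
  qed
qed

lemma ereal_cases_ge1: assumes "p \<ge> (1::ereal)" "p \<noteq> \<infinity>"
  obtains r where "p = ereal r" "r \<ge> 1" "real_of_ereal p = r"
  using assms by (cases p) auto

lemma Phi_ge: assumes "p \<ge> 1" "0 \<le> a" "0 \<le> b"
  shows "a \<le> Phi p a b" "b \<le> Phi p a b"
proof -
  show "a \<le> Phi p a b"
  proof (cases "p = \<infinity>")
    case True then show ?thesis by (simp add: Phi_def)
  next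
    case False
    then obtain r where r: "r \<ge> 1" "real_of_ereal p = r" using ereal_cases_ge1 assms by blast
    then show ?thesis using False fin_ge1[of r a b] assms by (simp add: Phi_def)
  qed
  show "b \<le> Phi p a b"
  proof (cases "p = \<infinity>")
    case True then show ?thesis by (simp add: Phi_def)
  next
    case False
    then obtain r where r: "r \<ge> 1" "real_of_ereal p = r" using ereal_cases_ge1 assms by blast
    then show ?thesis using False fin_ge1[of r b a] assms by (simp add: Phi_def add.commute)
  qed
qed

lemma Phi_nonneg: assumes "p \<ge> 1" "0 \<le> a" "0 \<le> b" shows "0 \<le> Phi p a b"
  using Phi_ge[OF assms] assms by linarith

lemma Phi_hom: assumes "p \<ge> 1" "0 \<le> a" "0 \<le> b" "0 \<le> t"
  shows "Phi p (t*a) (t*b) = t * Phi p a b"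
proof (cases "p = \<infinity>")
  case True then show ?thesis using assms by (simp add: Phi_def max_mult_distrib_left)
next
  case False
  then obtain r where r: "r \<ge> 1" "real_of_ereal p = r" using ereal_cases_ge1 assms by blast
  then show ?thesis using False fin_hom[of r a b t] assms by (simp add: Phi_def)
qed

lemma Phi_mono: assumes "p \<ge> 1" "0 \<le> a" "0 \<le> b" "a \<le> a'" "b \<le> b'"
  shows "Phi p a b \<le> Phi p a' b'"
proof (cases "p = \<infinity>")
  case True then show ?thesis using assms by (auto simp: Phi_def le_max_iff_disj)
next
  case False
  then obtain r where r: "r \<ge> 1" "real_of_ereal p = r" using ereal_cases_ge1 assms by blast
  then show ?thesis using False fin_mono[of r a b a' b'] assms by (simp add: Phi_def)
qed

lemma Phi_zero: assumes "p \<ge> 1" "0 \<le> a"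
  shows "Phi p a 0 = a" "Phi p 0 a = a"
proof -
  show "Phi p a 0 = a"
  proof (cases "p = \<infinity>")
    case True then show ?thesis using assms by (simp add: Phi_def)
  next
    case False
    then obtain r where r: "r \<ge> 1" "real_of_ereal p = r" using ereal_cases_ge1 assms by blast
    then show ?thesis using False fin_zero[of r a] assms by (simp add: Phi_def)
  qed
  show "Phi p 0 a = a"
  proof (cases "p = \<infinity>")
    case True then show ?thesis using assms by (simp add: Phi_def)
  next
    case False
    then obtain r where r: "r \<ge> 1" "real_of_ereal p = r" using ereal_cases_ge1 assms by blast
    then show ?thesis using False fin_zero[of r a] assms by (simp add: Phi_def)
  qed
qed

lemma Phi_one: assumes "0 \<le> a" "0 \<le> b" shows "Phi 1 a b = a + b"
  using assms by (simp add: Phi_def)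

lemma Phi_P: assumes "p > 1" "\<rho> > 0"
  shows "\<exists>K\<ge>1. \<forall>A B R. 0 \<le> A \<longrightarrow> 0 \<le> B \<longrightarrow> R \<ge> K * B \<longrightarrow> Phi p A B \<ge> R \<longrightarrow> A \<ge> R - \<rho> * B"
proof (cases "p = \<infinity>")
  case True
  show ?thesis
  proof (intro exI[of _ 2] conjI allI impI)
    fix A B R :: real assume h: "0 \<le> A" "0 \<le> B" "R \<ge> 2 * B" "Phi p A B \<ge> R"
    have "A \<ge> R"
    proof (rule ccontr)
      assume "\<not> A \<ge> R"
      then have "B \<ge> R" using h True by (auto simp: Phi_def)
      then show False using h \<open>\<not> A \<ge> R\<close> by linarith
    qed
    moreover have "\<rho> * B \<ge> 0" using h assms by simp
    ultimately show "A \<ge> R - \<rho> * B" by linarith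
  qed simp
next
  case False
  then obtain r where r: "p = ereal r" "r \<ge> 1" "real_of_ereal p = r" using ereal_cases_ge1[of p] assms(1) False by (metis order_less_imp_le)
  have r1: "r > 1" using assms r by simp
  define K where "K = max 1 (\<rho> powr (1/(1-r)))"
  have K1: "K \<ge> 1" by (simp add: K_def)
  have Kr: "K powr (1-r) \<le> \<rho>"
  proof -
    have "K powr (1-r) \<le> (\<rho> powr (1/(1-r))) powr (1-r)"
      using r1 assms by (intro powr_mono2') (auto simp: K_def)
    also have "\<dots> = \<rho>" using r1 assms by (simp add: powr_powr)
    finally show ?thesis .
  qed
  show ?thesis
  proof (intro exI[of _ K] conjI allI impI K1)
    fix A B R :: real assume h: "0 \<le> A" "0 \<le> B" "R \<ge> K * B" "Phi p A B \<ge> R"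
    have "A \<ge> R - K powr (1 - r) * B"
      using fin_P[OF r1 K1 h(1) h(2) h(3)] h(4) r(3) False unfolding Phi_def by simp
    moreover have "K powr (1 - r) * B \<le> \<rho> * B" using Kr h by (simp add: mult_right_mono)
    ultimately show "A \<ge> R - \<rho> * B" by linarith
  qed
qed




definition goodG :: "('a::real_normed_vector \<times> real) set \<Rightarrow> ('a \<times> real) set \<Rightarrow> bool" where
  "goodG S0 S \<longleftrightarrow> S0 \<subseteq> S \<and> (\<forall>x a y b. (x,a)\<in>S \<longrightarrow> (y,b)\<in>S \<longrightarrow> (x+y,a+b)\<in>S)
    \<and> (\<forall>x a c. (x,a)\<in>S \<longrightarrow> (c *\<^sub>R x, c*a)\<in>S)
    \<and> (\<forall>x a b. (x,a)\<in>S \<longrightarrow> (x,b)\<in>S \<longrightarrow> a = b)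
    \<and> (\<forall>x a. (x,a)\<in>S \<longrightarrow> a \<le> norm x)"

lemma goodG_D:
  assumes "goodG S0 S"
  shows "S0 \<subseteq> S" "\<And>x a y b. (x,a)\<in>S \<Longrightarrow> (y,b)\<in>S \<Longrightarrow> (x+y,a+b)\<in>S"
    "\<And>x a c. (x,a)\<in>S \<Longrightarrow> (c *\<^sub>R x, c*a)\<in>S"
    "\<And>x a b. (x,a)\<in>S \<Longrightarrow> (x,b)\<in>S \<Longrightarrow> a = b"
    "\<And>x a. (x,a)\<in>S \<Longrightarrow> a \<le> norm x"
  using assms unfolding goodG_def by blast+

lemma goodG_ext:
  assumes g: "goodG S0 M" and ne: "S0 \<noteq> {}" and x1: "\<forall>a. (x1,a) \<notin> M"
  shows "\<exists>S'. goodG S0 S' \<and> M \<subseteq> S' \<and> S' \<noteq> M"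
proof -
  have add: "\<And>x a y b. (x,a)\<in>M \<Longrightarrow> (y,b)\<in>M \<Longrightarrow> (x+y,a+b)\<in>M"
    and sc: "\<And>x a c. (x,a)\<in>M \<Longrightarrow> (c *\<^sub>R x, c*a)\<in>M"
    and fn: "\<And>x a b. (x,a)\<in>M \<Longrightarrow> (x,b)\<in>M \<Longrightarrow> a = b"
    and bd: "\<And>x a. (x,a)\<in>M \<Longrightarrow> a \<le> norm x"
    and sub: "S0 \<subseteq> M"
    using goodG_D[OF g] by blast+
  obtain z where "z \<in> S0" using ne by blast
  then obtain zx za where "(zx,za) \<in> M" using sub by (cases z) auto
  from sc[OF this, of 0] have z0: "(0,0) \<in> M" by simp
  define T where "T = {a - norm (m - x1) | m a. (m,a) \<in> M}"
  define c where "c = Sup T"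
  have ub: "\<And>m a m2 a2. (m,a)\<in>M \<Longrightarrow> (m2,a2)\<in>M \<Longrightarrow> a - norm (m - x1) \<le> norm (m2 + x1) - a2"
  proof -
    fix m a m2 a2 assume h: "(m,a)\<in>M" "(m2,a2)\<in>M"
    have "a + a2 \<le> norm (m + m2)" using bd[OF add[OF h]] .
    also have "m + m2 = (m - x1) + (m2 + x1)" by simp
    also have "norm \<dots> \<le> norm (m - x1) + norm (m2 + x1)" by (rule norm_triangle_ineq)
    finally show "a - norm (m - x1) \<le> norm (m2 + x1) - a2" by simp
  qed
  have Tne: "T \<noteq> {}" using z0 unfolding T_def by blast
  have Tbdd: "bdd_above T" unfolding T_def bdd_above_def using ub z0 by blast
  have c_le: "\<And>m2 a2. (m2,a2)\<in>M \<Longrightarrow> c \<le> norm (m2 + x1) - a2"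
    unfolding c_def using Tne ub by (intro cSup_least) (auto simp: T_def)
  have c_ge: "\<And>m a. (m,a)\<in>M \<Longrightarrow> a - norm (m - x1) \<le> c"
    unfolding c_def using Tbdd by (intro cSup_upper) (auto simp: T_def)
  define S' where "S' = {(m + t *\<^sub>R x1, a + t*c) | m a t. (m,a) \<in> M}"
  have MS: "M \<subseteq> S'"
  proof
    fix z assume "z \<in> M"
    then obtain m a where za: "z = (m,a)" "(m,a) \<in> M" by (cases z) auto
    then have "(m + 0 *\<^sub>R x1, a + 0*c) \<in> S'" unfolding S'_def by blast
    then show "z \<in> S'" using za by simp
  qed
  have neq: "S' \<noteq> M"
  proof -
    have "(0 + 1 *\<^sub>R x1, 0 + 1 * c) \<in> S'" unfolding S'_def using z0 by blast
    then have "(x1, c) \<in> S'" by simp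
    then show ?thesis using x1 by blast
  qed
  have "goodG S0 S'"
    unfolding goodG_def
  proof (intro conjI allI impI)
    show "S0 \<subseteq> S'" using sub MS by blast
  next
    fix x a y b assume h: "(x,a)\<in>S'" "(y,b)\<in>S'"
    then obtain m1 a1 t1 m2 a2 t2 where e: "x = m1 + t1 *\<^sub>R x1" "a = a1 + t1*c" "(m1,a1)\<in>M"
      "y = m2 + t2 *\<^sub>R x1" "b = a2 + t2*c" "(m2,a2)\<in>M" unfolding S'_def by blast
    have "(x+y, a+b) = ((m1+m2) + (t1+t2) *\<^sub>R x1, (a1+a2) + (t1+t2)*c)"
      using e by (simp add: algebra_simps scaleR_add_left)
    then show "(x+y, a+b) \<in> S'" unfolding S'_def using add[OF e(3) e(6)] by blast
  next
    fix x a k assume h: "(x,a)\<in>S'"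
    then obtain m1 a1 t1 where e: "x = m1 + t1 *\<^sub>R x1" "a = a1 + t1*c" "(m1,a1)\<in>M"
      unfolding S'_def by blast
    have "(k *\<^sub>R x, k*a) = (k *\<^sub>R m1 + (k*t1) *\<^sub>R x1, k*a1 + (k*t1)*c)"
      using e by (simp add: algebra_simps)
    then show "(k *\<^sub>R x, k*a) \<in> S'" unfolding S'_def using sc[OF e(3)] by blast
  next
    fix x a b assume h: "(x,a)\<in>S'" "(x,b)\<in>S'"
    then obtain m1 a1 t1 m2 a2 t2 where e: "x = m1 + t1 *\<^sub>R x1" "a = a1 + t1*c" "(m1,a1)\<in>M"
      "x = m2 + t2 *\<^sub>R x1" "b = a2 + t2*c" "(m2,a2)\<in>M" unfolding S'_def by blast
    have tt: "t1 = t2"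
    proof (rule ccontr)
      assume ne: "t1 \<noteq> t2"
      have d: "(m1 + -1 *\<^sub>R m2, a1 + -1 * a2) \<in> M" using add[OF e(3) sc[OF e(6), of "-1"]] .
      have "m1 - m2 = (t2 - t1) *\<^sub>R x1" using e(1) e(4) by (simp add: algebra_simps)
      then have xeq: "x1 = (1/(t2-t1)) *\<^sub>R (m1 + -1 *\<^sub>R m2)" using ne by simp
      have "(x1, (1/(t2-t1)) * (a1 + -1*a2)) \<in> M" by (subst xeq) (rule sc[OF d])
      then show False using x1 by blast
    qed
    then have "m1 = m2" using e by simp
    then have "a1 = a2" using fn e by blast
    then show "a = b" using e tt by simp
  next
    fix x a assume h: "(x,a)\<in>S'"
    then obtain m a1 t where e: "x = m + t *\<^sub>R x1" "a = a1 + t*c" "(m,a1)\<in>M"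
      unfolding S'_def by blast
    consider "t = 0" | "t > 0" | "t < 0" by linarith
    then show "a \<le> norm x"
    proof cases
      case 1 then show ?thesis using e bd by simp
    next
      case 2
      have "((1/t) *\<^sub>R m, (1/t)*a1) \<in> M" using sc[OF e(3)] .
      from c_le[OF this] have "c \<le> norm ((1/t) *\<^sub>R m + x1) - (1/t)*a1" .
      then have "t * c \<le> t * (norm ((1/t) *\<^sub>R m + x1) - (1/t)*a1)" using 2 by simp
      also have "\<dots> = t * norm ((1/t) *\<^sub>R m + x1) - a1" using 2 by (simp add: right_diff_distrib)
      also have eq: "t *\<^sub>R ((1/t) *\<^sub>R m + x1) = m + t *\<^sub>R x1" using 2 by (simp add: algebra_simps)
      have "t * norm ((1/t) *\<^sub>R m + x1) = norm (m + t *\<^sub>R x1)"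
        using 2 by (metis eq norm_scaleR abs_of_pos)
      finally show ?thesis using e by simp
    next
      case 3
      define s where "s = -t"
      have s: "s > 0" using 3 by (simp add: s_def)
      have "((1/s) *\<^sub>R m, (1/s)*a1) \<in> M" using sc[OF e(3)] .
      from c_ge[OF this] have "(1/s)*a1 - norm ((1/s) *\<^sub>R m - x1) \<le> c" .
      then have "s * ((1/s)*a1 - norm ((1/s) *\<^sub>R m - x1)) \<le> s * c" using s by simp
      moreover have eq: "s *\<^sub>R ((1/s) *\<^sub>R m - x1) = m + t *\<^sub>R x1" using s by (simp add: algebra_simps s_def)
      moreover have "s * norm ((1/s) *\<^sub>R m - x1) = norm (m + t *\<^sub>R x1)"
        using s by (metis eq norm_scaleR abs_of_pos)
      moreover have "s * ((1/s)*a1 - norm ((1/s) *\<^sub>R m - x1)) = a1 - s * norm ((1/s) *\<^sub>R m - x1)"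
        using s by (simp add: right_diff_distrib)
      ultimately show ?thesis using e by (simp add: s_def)
    qed
  qed
  then show ?thesis using MS neq by blast
qed

lemma hahn_banach_norm:
  fixes x0 :: "'a::real_normed_vector"
  assumes x0: "x0 \<noteq> 0"
  shows "\<exists>\<phi>. linear \<phi> \<and> (\<forall>x. \<bar>\<phi> x\<bar> \<le> norm x) \<and> \<phi> x0 = norm x0"
proof -
  define S0 where "S0 = range (\<lambda>t. (t *\<^sub>R x0, t * norm x0))"
  have S0ne: "S0 \<noteq> {}" unfolding S0_def by blast
  have gS0: "goodG S0 S0"
    unfolding goodG_def
  proof (intro conjI allI impI)
    fix x a y b assume h: "(x,a)\<in>S0" "(y,b)\<in>S0"
    obtain t where tx: "x = t *\<^sub>R x0" and ta: "a = t * norm x0" using h(1) unfolding S0_def by blast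
    obtain u where ux: "y = u *\<^sub>R x0" and ub: "b = u * norm x0" using h(2) unfolding S0_def by blast
    have e: "(x+y,a+b) = ((t+u) *\<^sub>R x0, (t+u) * norm x0)" using tx ta ux ub by (simp add: algebra_simps)
    have "((t+u) *\<^sub>R x0, (t+u) * norm x0) \<in> S0" unfolding S0_def by (rule rangeI)
    then show "(x+y,a+b)\<in>S0" using e by simp
  next
    fix x a c assume h: "(x,a)\<in>S0"
    obtain t where tx: "x = t *\<^sub>R x0" and ta: "a = t * norm x0" using h unfolding S0_def by blast
    have e: "(c *\<^sub>R x, c*a) = ((c*t) *\<^sub>R x0, (c*t) * norm x0)" using tx ta by simp
    have "((c*t) *\<^sub>R x0, (c*t) * norm x0) \<in> S0" unfolding S0_def by (rule rangeI)
    then show "(c *\<^sub>R x, c*a)\<in>S0" by (subst e)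
  next
    fix x a b assume h: "(x,a)\<in>S0" "(x,b)\<in>S0"
    obtain t where tx: "x = t *\<^sub>R x0" and ta: "a = t * norm x0" using h(1) unfolding S0_def by blast
    obtain u where ux: "x = u *\<^sub>R x0" and ub: "b = u * norm x0" using h(2) unfolding S0_def by blast
    have "t *\<^sub>R x0 = u *\<^sub>R x0" using trans[OF sym[OF tx] ux] .
    then have "(t - u) *\<^sub>R x0 = 0" by (simp add: scaleR_diff_left)
    then have "t = u" using \<open>x0 \<noteq> 0\<close> by simp
    then show "a = b" using ta ub by simp
  next
    fix x a assume h: "(x,a)\<in>S0"
    obtain t where tx: "x = t *\<^sub>R x0" and ta: "a = t * norm x0" using h unfolding S0_def by blast
    have "t * norm x0 \<le> \<bar>t\<bar> * norm x0" by (simp add: mult_right_mono)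
    then show "a \<le> norm x" using tx ta by simp
  qed simp
  define A where "A = {S. goodG S0 S}"
  have "\<exists>M\<in>A. \<forall>X\<in>A. M \<subseteq> X \<longrightarrow> X = M"
  proof (rule Zorn_Lemma2, intro ballI)
    fix C assume C: "C \<in> chains A"
    show "\<exists>U\<in>A. \<forall>X\<in>C. X \<subseteq> U"
    proof (cases "C = {}")
      case True then show ?thesis using gS0 unfolding A_def by blast
    next
      case False
      have CA: "\<And>S. S \<in> C \<Longrightarrow> goodG S0 S" using C unfolding chains_def A_def by blast
      have ch: "\<And>S T. S \<in> C \<Longrightarrow> T \<in> C \<Longrightarrow> S \<subseteq> T \<or> T \<subseteq> S"
        using C by (rule chainsD)
      have "goodG S0 (\<Union>C)"
        unfolding goodG_def
      proof (intro conjI allI impI)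
        obtain S where "S \<in> C" using False by blast
        then show "S0 \<subseteq> \<Union>C" using goodG_D(1)[OF CA] by blast
      next
        fix x a y b assume "(x,a)\<in>\<Union>C" "(y,b)\<in>\<Union>C"
        then obtain S T where ST: "S\<in>C" "T\<in>C" "(x,a)\<in>S" "(y,b)\<in>T" by blast
        from ch[OF ST(1,2)] show "(x+y,a+b)\<in>\<Union>C"
        proof
          assume "S \<subseteq> T"
          then have "(x+y,a+b)\<in>T" using goodG_D(2)[OF CA[OF ST(2)]] ST by blast
          then show ?thesis using ST by blast
        next
          assume "T \<subseteq> S"
          then have "(x+y,a+b)\<in>S" using goodG_D(2)[OF CA[OF ST(1)]] ST by blast
          then show ?thesis using ST by blast
        qed
      next
        fix x a c assume "(x,a)\<in>\<Union>C"
        then obtain S where S: "S\<in>C" "(x,a)\<in>S" by blast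
        then have "(c *\<^sub>R x, c*a)\<in>S" using goodG_D(3)[OF CA[OF S(1)]] by blast
        then show "(c *\<^sub>R x, c*a)\<in>\<Union>C" using S by blast
      next
        fix x a b assume "(x,a)\<in>\<Union>C" "(x,b)\<in>\<Union>C"
        then obtain S T where ST: "S\<in>C" "T\<in>C" "(x,a)\<in>S" "(x,b)\<in>T" by blast
        from ch[OF ST(1,2)] show "a = b"
        proof
          assume "S \<subseteq> T"
          then show ?thesis using goodG_D(4)[OF CA[OF ST(2)]] ST by blast
        next
          assume "T \<subseteq> S"
          then show ?thesis using goodG_D(4)[OF CA[OF ST(1)]] ST by blast
        qed
      next
        fix x a assume "(x,a)\<in>\<Union>C"
        then obtain S where S: "S\<in>C" "(x,a)\<in>S" by blast
        then show "a \<le> norm x" using goodG_D(5)[OF CA[OF S(1)]] by blast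
      qed
      then show ?thesis unfolding A_def by blast
    qed
  qed
  then obtain M where gM: "goodG S0 M" and mx: "\<And>X. goodG S0 X \<Longrightarrow> M \<subseteq> X \<Longrightarrow> X = M"
    unfolding A_def by blast
  have tot: "\<And>x. \<exists>a. (x,a) \<in> M"
  proof (rule ccontr)
    fix x assume "\<not> (\<exists>a. (x,a) \<in> M)"
    then obtain S' where "goodG S0 S'" "M \<subseteq> S'" "S' \<noteq> M" using goodG_ext[OF gM S0ne] by blast
    then show False using mx by blast
  qed
  note sub = goodG_D(1)[OF gM] and add = goodG_D(2)[OF gM] and sc = goodG_D(3)[OF gM]
    and fn = goodG_D(4)[OF gM] and bd = goodG_D(5)[OF gM]
  define \<phi> where "\<phi> x = (THE a. (x,a) \<in> M)" for x
  have phiE: "\<And>x a. (x,a) \<in> M \<Longrightarrow> \<phi> x = a"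
    unfolding \<phi>_def using fn by (intro the_equality) auto
  have phiM: "\<And>x. (x, \<phi> x) \<in> M"
  proof -
    fix x obtain a where "(x,a) \<in> M" using tot by blast
    then show "(x, \<phi> x) \<in> M" using phiE by simp
  qed
  have lin: "linear \<phi>"
  proof (rule linearI)
    fix x y show "\<phi> (x + y) = \<phi> x + \<phi> y" using phiE[OF add[OF phiM phiM]] .
  next
    fix r x show "\<phi> (r *\<^sub>R x) = r *\<^sub>R \<phi> x" using phiE[OF sc[OF phiM]] by simp
  qed
  have "\<And>x. \<bar>\<phi> x\<bar> \<le> norm x"
  proof -
    fix x
    have "\<phi> x \<le> norm x" using bd[OF phiM] .
    moreover have "\<phi> (-x) \<le> norm (-x)" using bd[OF phiM] .
    moreover have "\<phi> (-x) = - \<phi> x" using lin by (simp add: linear_neg)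
    ultimately show "\<bar>\<phi> x\<bar> \<le> norm x" by simp
  qed
  moreover have "\<phi> x0 = norm x0"
  proof -
    have "(1 *\<^sub>R x0, 1 * norm x0) \<in> S0" unfolding S0_def by blast
    then show ?thesis using sub phiE by auto
  qed
  ultimately show ?thesis using lin by blast
qed




lemma dualnorm:
  fixes g :: "'a::real_normed_vector \<Rightarrow> real"
  assumes ne: "\<exists>x::'a. x \<noteq> 0" and lg: "linear g" and gb: "\<forall>x. \<bar>g x\<bar> \<le> norm x"
  shows "\<exists>G gn. 0 \<le> G \<and> G \<le> 1 \<and> linear gn \<and> (\<forall>x. \<bar>gn x\<bar> \<le> norm x)
     \<and> (\<forall>x. \<bar>g x\<bar> = G * \<bar>gn x\<bar>) \<and> (\<forall>\<eta>>0. \<exists>x. norm x = 1 \<and> gn x > 1 - \<eta>)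
     \<and> (\<forall>\<eta>>0. \<exists>x. norm x = 1 \<and> g x > G - \<eta>)"
proof -
  obtain x0 :: 'a where x0: "x0 \<noteq> 0" using ne by blast
  define u0 where "u0 = (1 / norm x0) *\<^sub>R x0"
  have u0: "norm u0 = 1" using x0 by (simp add: u0_def)
  define T where "T = {\<bar>g x\<bar> | x. norm x = 1}"
  define G where "G = Sup T"
  have Tne: "T \<noteq> {}" using u0 unfolding T_def by blast
  have Tb: "\<And>t. t \<in> T \<Longrightarrow> t \<le> 1"
  proof -
    fix t assume "t \<in> T"
    then obtain x where "t = \<bar>g x\<bar>" "norm x = 1" unfolding T_def by blast
    then show "t \<le> 1" using gb by metis
  qed
  have Tbdd: "bdd_above T" using Tb by (auto simp: bdd_above_def)
  have G0: "0 \<le> G" unfolding G_def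
    using cSup_upper[OF _ Tbdd, of "\<bar>g u0\<bar>"] u0 unfolding T_def by force
  have G1: "G \<le> 1" unfolding G_def using Tne Tb by (intro cSup_least) auto
  have gG: "\<And>x. \<bar>g x\<bar> \<le> G * norm x"
  proof -
    fix x :: 'a
    show "\<bar>g x\<bar> \<le> G * norm x"
    proof (cases "x = 0")
      case True then show ?thesis using gb by (metis abs_le_zero_iff mult_zero_right norm_zero)
    next
      case False
      have "\<bar>g ((1/norm x) *\<^sub>R x)\<bar> \<in> T" unfolding T_def using False by auto
      then have "\<bar>g ((1/norm x) *\<^sub>R x)\<bar> \<le> G" unfolding G_def using Tbdd by (rule cSup_upper)
      then have "\<bar>g x\<bar> / norm x \<le> G" using lg False by (simp add: linear_scale)
      then show ?thesis using False by (simp add: divide_le_eq mult.commute)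
    qed
  qed
  have gnear: "\<forall>\<eta>>0. \<exists>x. norm x = 1 \<and> g x > G - \<eta>"
  proof (intro allI impI)
    fix \<eta> :: real assume "\<eta> > 0"
    then have "G - \<eta> < Sup T" unfolding G_def by simp
    then obtain t where "t \<in> T" "G - \<eta> < t" using less_cSupD[OF Tne] by blast
    then obtain x where x: "norm x = 1" "G - \<eta> < \<bar>g x\<bar>" unfolding T_def by blast
    show "\<exists>x. norm x = 1 \<and> g x > G - \<eta>"
    proof (cases "g x \<ge> 0")
      case True then show ?thesis using x by auto
    next
      case False
      have "g (-x) = - g x" using lg by (simp add: linear_neg)
      then show ?thesis using x False by (intro exI[of _ "-x"]) auto
    qed
  qed
  show ?thesis
  proof (cases "G = 0")
    case True
    obtain \<phi> where \<phi>: "linear \<phi>" "\<forall>x. \<bar>\<phi> x\<bar> \<le> norm x" "\<phi> x0 = norm x0"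
      using hahn_banach_norm[OF x0] by blast
    have "\<phi> u0 = 1" using \<phi> x0 by (simp add: u0_def linear_scale)
    then have "\<forall>\<eta>>0. \<exists>x. norm x = 1 \<and> \<phi> x > 1 - \<eta>" using u0 by auto
    moreover have "\<forall>x. \<bar>g x\<bar> = G * \<bar>\<phi> x\<bar>" using gG True by (simp add: abs_le_zero_iff)
    ultimately show ?thesis using G0 G1 \<phi> gnear by blast
  next
    case False
    then have Gp: "G > 0" using G0 by simp
    define gn where "gn x = g x / G" for x
    have lgn: "linear gn"
      by (rule linearI) (simp_all add: gn_def linear_add[OF lg] linear_scale[OF lg] add_divide_distrib)
    have "\<forall>x. \<bar>gn x\<bar> \<le> norm x" using gG Gp by (simp add: gn_def divide_le_eq mult.commute)
    moreover have "\<forall>x. \<bar>g x\<bar> = G * \<bar>gn x\<bar>" using Gp by (simp add: gn_def)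
    moreover have "\<forall>\<eta>>0. \<exists>x. norm x = 1 \<and> gn x > 1 - \<eta>"
    proof (intro allI impI)
      fix \<eta> :: real assume "\<eta> > 0"
      then obtain x where "norm x = 1" "g x > G - G*\<eta>" using gnear Gp by (meson mult_pos_pos)
      then show "\<exists>x. norm x = 1 \<and> gn x > 1 - \<eta>" using Gp
        by (intro exI[of _ x]) (simp add: gn_def less_divide_eq algebra_simps)
    qed
    ultimately show ?thesis using G0 G1 lgn gnear by blast
  qed
qed




lemma woh_intro:
  fixes N :: "'v::real_vector \<Rightarrow> real"
  assumes H: "\<And>E f \<epsilon>. subspace E \<Longrightarrow> (\<exists>F. finite F \<and> E = span F) \<Longrightarrow> linear f \<Longrightarrow>
     (\<forall>z. \<bar>f z\<bar> \<le> N z) \<Longrightarrow> 0 < \<epsilon> \<Longrightarrow> \<epsilon> < 1 \<Longrightarrow>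
     \<exists>w. N w = 1 \<and> (\<forall>z\<in>E. N (z + w) \<ge> (1 - \<epsilon>) * (\<bar>f z\<bar> + N w))"
  shows "weakly_octahedral_wrt N"
  unfolding weakly_octahedral_wrt_def
proof (intro allI impI)
  fix E :: "'v set" and f :: "'v \<Rightarrow> real" and \<epsilon> :: real
  assume h: "subspace E \<and> (\<exists>F. finite F \<and> E = span F) \<and> linear f \<and> (\<forall>z. \<bar>f z\<bar> \<le> N z) \<and> 0 < \<epsilon>"
  define \<epsilon>' where "\<epsilon>' = min \<epsilon> (1/2)"
  have e': "0 < \<epsilon>'" "\<epsilon>' < 1" "\<epsilon>' \<le> \<epsilon>" using h by (auto simp: \<epsilon>'_def)
  obtain w where w: "N w = 1" "\<forall>z\<in>E. N (z + w) \<ge> (1 - \<epsilon>') * (\<bar>f z\<bar> + N w)"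
    using H[of E f \<epsilon>'] h e' by blast
  have "\<forall>z\<in>E. N (z + w) \<ge> (1 - \<epsilon>) * (\<bar>f z\<bar> + N w)"
  proof
    fix z assume "z \<in> E"
    have "(1 - \<epsilon>) * (\<bar>f z\<bar> + N w) \<le> (1 - \<epsilon>') * (\<bar>f z\<bar> + N w)"
      using e' w(1) by (intro mult_right_mono) auto
    then show "N (z + w) \<ge> (1 - \<epsilon>) * (\<bar>f z\<bar> + N w)" using w(2) \<open>z \<in> E\<close> by force
  qed
  then show "\<exists>w. N w = 1 \<and> (\<forall>z\<in>E. (1 - \<epsilon>) * (\<bar>f z\<bar> + N w) \<le> N (z + w))" using w(1) by blast
qed

lemma woh_scaled:
  assumes W: "weakly_octahedral_wrt N" and hom: "\<And>t z. t \<ge> 0 \<Longrightarrow> N (t *\<^sub>R z) = t * N z"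
    and E: "subspace E" "\<exists>F. finite F \<and> E = span F" and lf: "linear f"
    and fb: "\<forall>z. \<bar>f z\<bar> \<le> N z" and e: "0 < \<epsilon>" "\<epsilon> < 1"
  shows "\<exists>w. N w = 1 \<and> (\<forall>z\<in>E. \<forall>t\<ge>0. N (z + t *\<^sub>R w) \<ge> (1 - \<epsilon>) * (\<bar>f z\<bar> + t))"
proof -
  obtain w where w: "N w = 1" "\<forall>z\<in>E. N (z + w) \<ge> (1 - \<epsilon>) * (\<bar>f z\<bar> + N w)"
    using W E lf fb e unfolding weakly_octahedral_wrt_def by blast
  have "\<forall>z\<in>E. \<forall>t\<ge>0. N (z + t *\<^sub>R w) \<ge> (1 - \<epsilon>) * (\<bar>f z\<bar> + t)"
  proof (intro ballI allI impI)
    fix z and t :: real assume z: "z \<in> E" and t: "t \<ge> 0"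
    show "N (z + t *\<^sub>R w) \<ge> (1 - \<epsilon>) * (\<bar>f z\<bar> + t)"
    proof (cases "t = 0")
      case True
      have "(1 - \<epsilon>) * \<bar>f z\<bar> \<le> \<bar>f z\<bar>" using e by (simp add: mult_left_le_one_le)
      moreover have "N (z + t *\<^sub>R w) = N z" using True by simp
      ultimately show ?thesis using True fb by (metis add_0_right order.trans)
    next
      case False
      then have tp: "t > 0" using t by simp
      have z': "(1/t) *\<^sub>R z \<in> E" using E(1) z by (rule subspace_scale)
      have "N ((1/t) *\<^sub>R z + w) \<ge> (1 - \<epsilon>) * (\<bar>f ((1/t) *\<^sub>R z)\<bar> + 1)" using w z' by simp
      then have h1: "N ((1/t) *\<^sub>R z + w) \<ge> (1 - \<epsilon>) * (\<bar>f z\<bar> / t + 1)"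
        using lf tp by (simp add: linear_scale)
      have "z + t *\<^sub>R w = t *\<^sub>R ((1/t) *\<^sub>R z + w)" using tp by (simp add: algebra_simps)
      then have "N (z + t *\<^sub>R w) = t * N ((1/t) *\<^sub>R z + w)" using hom t by simp
      also have "\<dots> \<ge> t * ((1 - \<epsilon>) * (\<bar>f z\<bar> / t + 1))" using h1 tp by simp
      also have "t * ((1 - \<epsilon>) * (\<bar>f z\<bar> / t + 1)) = (1 - \<epsilon>) * (\<bar>f z\<bar> + t)"
        using tp by (simp add: field_simps)
      finally show ?thesis .
    qed
  qed
  then show ?thesis using w(1) by blast
qed

lemma lin_inl: "linear (\<lambda>x::'a::real_vector. (x, 0::'b::real_vector))"
  by (rule linearI) (simp_all add: prod_eq_iff)
lemma lin_inr: "linear (\<lambda>y::'b::real_vector. (0::'a::real_vector, y))"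
  by (rule linearI) (simp_all add: prod_eq_iff)

lemma psum_hom: assumes "p \<ge> 1" "t \<ge> 0"
  shows "psum_norm p (t *\<^sub>R z) = t * psum_norm p z"
  using Phi_hom[OF assms(1) _ _ assms(2), of "norm (fst z)" "norm (snd z)"] assms
  by (simp add: psum_Phi)

lemma psum_ge: assumes "p \<ge> 1"
  shows "norm (fst z) \<le> psum_norm p z" "norm (snd z) \<le> psum_norm p z"
  using Phi_ge[OF assms, of "norm (fst z)" "norm (snd z)"] by (simp_all add: psum_Phi)

lemma psum_inl: assumes "p \<ge> 1" shows "psum_norm p (x, 0) = norm x" "psum_norm p (0, y) = norm y"
  using Phi_zero[OF assms] by (simp_all add: psum_Phi)

lemma proj_span:
  fixes E :: "('a::real_vector \<times> 'b::real_vector) set"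
  assumes "\<exists>F. finite F \<and> E = span F"
  shows "subspace (fst ` E)" "\<exists>F. finite F \<and> fst ` E = span F"
        "subspace (snd ` E)" "\<exists>F. finite F \<and> snd ` E = span F"
proof -
  obtain F where F: "finite F" "E = span F" using assms by blast
  have "fst ` E = span (fst ` F)" using F by (simp add: span_linear_image[OF linear_fst])
  moreover have "snd ` E = span (snd ` F)" using F by (simp add: span_linear_image[OF linear_snd])
  ultimately show "subspace (fst ` E)" "\<exists>F. finite F \<and> fst ` E = span F"
        "subspace (snd ` E)" "\<exists>F. finite F \<and> snd ` E = span F"
    using F by (auto intro: subspace_span)
qed

lemma split_fun:
  fixes f :: "'a::real_vector \<times> 'b::real_vector \<Rightarrow> real"
  assumes "linear f"
  shows "f z = f (fst z, 0) + f (0, snd z)" "linear (\<lambda>x. f (x,0))" "linear (\<lambda>y. f (0,y))"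
proof -
  have "z = (fst z, 0) + (0, snd z)" by (simp add: prod_eq_iff)
  then show "f z = f (fst z, 0) + f (0, snd z)" using assms by (metis linear_add)
  show "linear (\<lambda>x. f (x,0))" using linear_compose[OF lin_inl assms] by (simp add: o_def)
  show "linear (\<lambda>y. f (0,y))" using linear_compose[OF lin_inr assms] by (simp add: o_def)
qed




lemma norm_hom: "t \<ge> 0 \<Longrightarrow> norm (t *\<^sub>R z) = t * norm z" by simp

lemma part_a:
  assumes WX: "weakly_octahedral_wrt (norm :: 'a::real_normed_vector \<Rightarrow> real)"
  shows "weakly_octahedral_wrt (psum_norm 1 :: 'a \<times> 'b::real_normed_vector \<Rightarrow> real)"
proof (rule woh_intro)
  fix E :: "('a \<times> 'b) set" and f :: "'a \<times> 'b \<Rightarrow> real" and \<epsilon> :: real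
  assume E: "subspace E" "\<exists>F. finite F \<and> E = span F" and lf: "linear f"
    and fb: "\<forall>z. \<bar>f z\<bar> \<le> psum_norm 1 z" and e: "0 < \<epsilon>" "\<epsilon> < 1"
  define g where "g x = f (x, 0)" for x
  define h where "h y = f (0, y)" for y
  have lg: "linear g" unfolding g_def[abs_def] using split_fun(2)[OF lf] .
  have gb: "\<forall>x. \<bar>g x\<bar> \<le> norm x"
  proof
    fix x have "\<bar>f (x,0)\<bar> \<le> psum_norm 1 (x, 0::'b)" using fb by blast
    moreover have "psum_norm 1 (x, 0::'b) = norm x" by (rule psum_inl) simp
    ultimately show "\<bar>g x\<bar> \<le> norm x" unfolding g_def by linarith
  qed
  have hb: "\<forall>y. \<bar>h y\<bar> \<le> norm y"
  proof
    fix y have "\<bar>f (0,y)\<bar> \<le> psum_norm 1 (0::'a, y)" using fb by blast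
    moreover have "psum_norm 1 (0::'a, y) = norm y" by (rule psum_inl) simp
    ultimately show "\<bar>h y\<bar> \<le> norm y" unfolding h_def by linarith
  qed
  obtain w where w: "norm w = 1" "\<forall>x\<in>fst ` E. \<forall>t\<ge>0. norm (x + t *\<^sub>R w) \<ge> (1 - \<epsilon>) * (\<bar>g x\<bar> + t)"
    using woh_scaled[OF WX norm_hom proj_span(1,2)[OF E(2)] lg gb e] by blast
  define W where "W = (w, 0::'b)"
  have NW: "psum_norm 1 W = 1" using w by (simp add: W_def psum_inl)
  have "\<forall>z\<in>E. psum_norm 1 (z + W) \<ge> (1 - \<epsilon>) * (\<bar>f z\<bar> + psum_norm 1 W)"
  proof
    fix z assume z: "z \<in> E"
    have x: "fst z \<in> fst ` E" using z by blast
    have h1: "norm (fst z + w) \<ge> (1 - \<epsilon>) * (\<bar>g (fst z)\<bar> + 1)" using w(2) x by (metis order_refl zero_le_one scale_one)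
    have "psum_norm 1 (z + W) = norm (fst z + w) + norm (snd z)"
      by (simp add: psum_Phi W_def Phi_one)
    also have "\<dots> \<ge> (1 - \<epsilon>) * (\<bar>g (fst z)\<bar> + 1) + \<bar>h (snd z)\<bar>" using h1 hb by (simp add: add_mono)
    finally have h2: "psum_norm 1 (z + W) \<ge> (1 - \<epsilon>) * (\<bar>g (fst z)\<bar> + 1) + \<bar>h (snd z)\<bar>" .
    have "\<bar>f z\<bar> \<le> \<bar>g (fst z)\<bar> + \<bar>h (snd z)\<bar>"
      using split_fun(1)[OF lf, of z] by (simp add: g_def h_def)
    then have "(1 - \<epsilon>) * (\<bar>f z\<bar> + 1) \<le> (1 - \<epsilon>) * (\<bar>g (fst z)\<bar> + 1) + (1 - \<epsilon>) * \<bar>h (snd z)\<bar>"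
      using e by (simp add: mult_left_mono distrib_left[symmetric])
    also have "(1 - \<epsilon>) * \<bar>h (snd z)\<bar> \<le> \<bar>h (snd z)\<bar>" using e by (simp add: mult_left_le_one_le)
    finally show "psum_norm 1 (z + W) \<ge> (1 - \<epsilon>) * (\<bar>f z\<bar> + psum_norm 1 W)"
      using h2 NW by simp
  qed
  then show "\<exists>w. psum_norm 1 w = 1 \<and> (\<forall>z\<in>E. psum_norm 1 (z + w) \<ge> (1 - \<epsilon>) * (\<bar>f z\<bar> + psum_norm 1 w))"
    using NW by blast
qed




lemma scalar_S:
  assumes p: "p \<ge> 1" and G: "G \<ge> 0" "H \<ge> 0"
    and hyp: "\<And>a b. 0 \<le> a \<Longrightarrow> 0 \<le> b \<Longrightarrow> G*a + H*b \<le> Phi p a b" and eta: "0 < \<eta>"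
  shows "\<exists>\<alpha> \<beta>. 0 \<le> \<alpha> \<and> 0 \<le> \<beta> \<and> Phi p \<alpha> \<beta> = 1 \<and>
     (\<forall>A B. 0 \<le> A \<longrightarrow> 0 \<le> B \<longrightarrow> (1-\<eta>)*(G*A+H*B+1) \<le> Phi p (A+\<alpha>) (B+\<beta>))"
proof -
  define T where "T = {G*a + H*b | a b. 0 \<le> a \<and> 0 \<le> b \<and> Phi p a b = 1}"
  define c where "c = Sup T"
  have K10: "Phi p 1 0 = 1" "Phi p 0 1 = 1" using Phi_zero[OF p, of 1] by simp_all
  have GT: "G \<in> T" unfolding T_def using K10 by (intro CollectI exI[of _ 1] exI[of _ 0]) auto
  have HT: "H \<in> T" unfolding T_def using K10 by (intro CollectI exI[of _ 0] exI[of _ 1]) auto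
  have Tne: "T \<noteq> {}" using GT by blast
  have Tb: "\<And>t. t \<in> T \<Longrightarrow> t \<le> 1" unfolding T_def using hyp by force
  have Tbdd: "bdd_above T" using Tb by (auto simp: bdd_above_def)
  have Gc: "G \<le> c" unfolding c_def using GT Tbdd by (rule cSup_upper)
  have Hc: "H \<le> c" unfolding c_def using HT Tbdd by (rule cSup_upper)
  have c1: "c \<le> 1" unfolding c_def using Tne Tb by (intro cSup_least) auto
  show ?thesis
  proof (cases "c = 0")
    case True
    then have "G = 0" "H = 0" using Gc Hc G by auto
    have "\<forall>A B. 0 \<le> A \<longrightarrow> 0 \<le> B \<longrightarrow> (1-\<eta>)*(G*A+H*B+1) \<le> Phi p (A+1) (B+0)"
    proof (intro allI impI)
      fix A B :: real assume AB: "0 \<le> A" "0 \<le> B"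
      have "A + 1 \<le> Phi p (A+1) (B+0)" using Phi_ge[OF p, of "A+1" "B+0"] AB by simp
      then show "(1-\<eta>)*(G*A+H*B+1) \<le> Phi p (A+1) (B+0)" using \<open>G = 0\<close> \<open>H = 0\<close> eta AB by simp
    qed
    then show ?thesis using K10 by (intro exI[of _ 1] exI[of _ 0]) simp
  next
    case False
    then have cp: "c > 0" using Gc G by simp
    have "c - c*\<eta> < Sup T" using cp eta unfolding c_def by simp
    then obtain t where "t \<in> T" "c - c*\<eta> < t" using less_cSupD[OF Tne] by blast
    then obtain \<alpha> \<beta> where ab: "0 \<le> \<alpha>" "0 \<le> \<beta>" "Phi p \<alpha> \<beta> = 1" "G*\<alpha> + H*\<beta> > c - c*\<eta>"
      unfolding T_def by blast
    have scl: "\<And>A B. 0 \<le> A \<Longrightarrow> 0 \<le> B \<Longrightarrow> G*A + H*B \<le> c * Phi p A B"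
    proof -
      fix A B :: real assume AB: "0 \<le> A" "0 \<le> B"
      define s where "s = Phi p A B"
      have s0: "s \<ge> 0" using Phi_nonneg[OF p AB] by (simp add: s_def)
      show "G*A + H*B \<le> c * Phi p A B"
      proof (cases "s = 0")
        case True
        then have "A = 0" "B = 0" using Phi_ge[OF p AB] AB by (auto simp: s_def)
        then show ?thesis using True by (simp add: s_def)
      next
        case False
        then have sp: "s > 0" using s0 by simp
        have "Phi p ((1/s)*A) ((1/s)*B) = (1/s) * s" using Phi_hom[OF p AB, of "1/s"] sp by (simp add: s_def)
        then have "Phi p ((1/s)*A) ((1/s)*B) = 1" using sp by simp
        moreover have "0 \<le> (1/s)*A" "0 \<le> (1/s)*B" using AB sp by simp_all
        ultimately have "G*((1/s)*A) + H*((1/s)*B) \<in> T" unfolding T_def by blast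
        then have "G*((1/s)*A) + H*((1/s)*B) \<le> c" unfolding c_def using Tbdd by (rule cSup_upper)
        then have "(G*A + H*B) / s \<le> c" by (simp add: add_divide_distrib)
        then show ?thesis using sp by (simp add: s_def divide_le_eq mult.commute)
      qed
    qed
    have "\<forall>A B. 0 \<le> A \<longrightarrow> 0 \<le> B \<longrightarrow> (1-\<eta>)*(G*A+H*B+1) \<le> Phi p (A+\<alpha>) (B+\<beta>)"
    proof (intro allI impI)
      fix A B :: real assume AB: "0 \<le> A" "0 \<le> B"
      have "G*(A+\<alpha>) + H*(B+\<beta>) \<le> c * Phi p (A+\<alpha>) (B+\<beta>)" using scl AB ab by simp
      then have "(G*A + H*B) + (G*\<alpha> + H*\<beta>) \<le> c * Phi p (A+\<alpha>) (B+\<beta>)" by (simp add: algebra_simps)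
      moreover have "c*(G*A + H*B) \<le> G*A+H*B" using c1 cp AB G by (simp add: mult_left_le_one_le)
      ultimately have "c*(G*A + H*B) + c - c*\<eta> < c * Phi p (A+\<alpha>) (B+\<beta>)" using ab(4) by linarith
      then have "c*((G*A + H*B) + 1 - \<eta>) < c * Phi p (A+\<alpha>) (B+\<beta>)" by (simp add: algebra_simps)
      then have "(G*A + H*B) + 1 - \<eta> < Phi p (A+\<alpha>) (B+\<beta>)" using cp by simp
      moreover have "(1-\<eta>)*(G*A+H*B+1) \<le> (G*A + H*B) + 1 - \<eta>"
        using eta AB G by (simp add: algebra_simps)
      ultimately show "(1-\<eta>)*(G*A+H*B+1) \<le> Phi p (A+\<alpha>) (B+\<beta>)" by linarith
    qed
    then show ?thesis using ab by blast
  qed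
qed




lemma fsplit_bounds:
  fixes f :: "'a::real_normed_vector \<times> 'b::real_normed_vector \<Rightarrow> real"
  assumes p1: "p \<ge> 1" and lf: "linear f" and fb: "\<forall>z. \<bar>f z\<bar> \<le> psum_norm p z"
  shows "linear (\<lambda>x. f (x,0))" "linear (\<lambda>y. f (0,y))"
    "\<forall>x. \<bar>f (x,0)\<bar> \<le> norm x" "\<forall>y. \<bar>f (0,y)\<bar> \<le> norm y"
proof -
  show "linear (\<lambda>x. f (x,0))" "linear (\<lambda>y. f (0,y))" using split_fun[OF lf] by blast+
  show "\<forall>x. \<bar>f (x,0)\<bar> \<le> norm x"
  proof
    fix x have "\<bar>f (x,0)\<bar> \<le> psum_norm p (x, 0::'b)" using fb by blast
    moreover have "psum_norm p (x, 0::'b) = norm x" by (rule psum_inl) (rule p1)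
    ultimately show "\<bar>f (x,0)\<bar> \<le> norm x" by linarith
  qed
  show "\<forall>y. \<bar>f (0,y)\<bar> \<le> norm y"
  proof
    fix y have "\<bar>f (0,y)\<bar> \<le> psum_norm p (0::'a, y)" using fb by blast
    moreover have "psum_norm p (0::'a, y) = norm y" by (rule psum_inl) (rule p1)
    ultimately show "\<bar>f (0,y)\<bar> \<le> norm y" by linarith
  qed
qed

lemma part_b:
  assumes p: "1 < p"
    and WX: "weakly_octahedral_wrt (norm :: 'a::real_normed_vector \<Rightarrow> real)"
    and WY: "weakly_octahedral_wrt (norm :: 'b::real_normed_vector \<Rightarrow> real)"
    and nX: "\<exists>x::'a. x \<noteq> 0" and nY: "\<exists>y::'b. y \<noteq> 0"
  shows "weakly_octahedral_wrt (psum_norm p :: 'a \<times> 'b \<Rightarrow> real)"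
proof (rule woh_intro)
  have p1: "p \<ge> 1" using p by simp
  fix E :: "('a \<times> 'b) set" and f :: "'a \<times> 'b \<Rightarrow> real" and \<epsilon> :: real
  assume E: "subspace E" "\<exists>F. finite F \<and> E = span F" and lf: "linear f"
    and fb: "\<forall>z. \<bar>f z\<bar> \<le> psum_norm p z" and e: "0 < \<epsilon>" "\<epsilon> < 1"
  define g where "g x = f (x, 0)" for x
  define h where "h y = f (0, y)" for y
  note fs = fsplit_bounds[OF p1 lf fb]
  have lg: "linear g" unfolding g_def[abs_def] by (rule fs(1))
  have lh: "linear h" unfolding h_def[abs_def] by (rule fs(2))
  have gb: "\<forall>x. \<bar>g x\<bar> \<le> norm x" unfolding g_def by (rule fs(3))
  have hb: "\<forall>y. \<bar>h y\<bar> \<le> norm y" unfolding h_def by (rule fs(4))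
  have fgh: "\<And>z. f z = g (fst z) + h (snd z)" unfolding g_def h_def by (rule split_fun(1)[OF lf])
  obtain G gn where G: "0 \<le> G" "G \<le> 1" "linear gn" "\<forall>x. \<bar>gn x\<bar> \<le> norm x"
     "\<forall>x. \<bar>g x\<bar> = G * \<bar>gn x\<bar>" "\<forall>\<eta>>0. \<exists>x. norm x = 1 \<and> g x > G - \<eta>"
    using dualnorm[OF nX lg gb] by blast
  obtain H hn where H: "0 \<le> H" "H \<le> 1" "linear hn" "\<forall>y. \<bar>hn y\<bar> \<le> norm y"
     "\<forall>y. \<bar>h y\<bar> = H * \<bar>hn y\<bar>" "\<forall>\<eta>>0. \<exists>y. norm y = 1 \<and> h y > H - \<eta>"
    using dualnorm[OF nY lh hb] by blast
  have hyp: "\<And>a b. 0 \<le> a \<Longrightarrow> 0 \<le> b \<Longrightarrow> G*a + H*b \<le> Phi p a b"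
  proof (rule ccontr)
    fix a b :: real assume ab: "0 \<le> a" "0 \<le> b" and nh: "\<not> G*a + H*b \<le> Phi p a b"
    define d where "d = G*a + H*b - Phi p a b"
    have dp: "d > 0" using nh by (simp add: d_def)
    define \<eta> where "\<eta> = d / (a + b + 1)"
    have etap: "\<eta> > 0" using dp ab by (simp add: \<eta>_def)
    have etab: "\<eta> * (a + b) < d"
    proof -
      have "\<eta> * (a + b + 1) = d" using ab by (simp add: \<eta>_def)
      then show ?thesis using etap by (simp add: algebra_simps)
    qed
    obtain x where x: "norm x = 1" "g x > G - \<eta>" using G(6) etap by blast
    obtain y where y: "norm y = 1" "h y > H - \<eta>" using H(6) etap by blast
    have "f (a *\<^sub>R x, b *\<^sub>R y) = a * g x + b * h y"
      using fgh lg lh by (simp add: linear_scale)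
    also have "\<dots> \<ge> a * (G - \<eta>) + b * (H - \<eta>)" using x y ab
      by (intro add_mono mult_left_mono) auto
    finally have h1: "f (a *\<^sub>R x, b *\<^sub>R y) \<ge> G*a + H*b - \<eta> * (a + b)" by (simp add: algebra_simps)
    have "f (a *\<^sub>R x, b *\<^sub>R y) \<le> psum_norm p (a *\<^sub>R x, b *\<^sub>R y)" using fb by (metis abs_ge_self order_trans)
    also have "\<dots> = Phi p a b" using x y ab by (simp add: psum_Phi)
    finally show False using h1 etab d_def by linarith
  qed
  define \<delta> where "\<delta> = \<epsilon> / 2"
  have d: "0 < \<delta>" "\<delta> < 1" using e by (auto simp: \<delta>_def)
  obtain \<alpha> \<beta> where ab: "0 \<le> \<alpha>" "0 \<le> \<beta>" "Phi p \<alpha> \<beta> = 1"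
     "\<forall>A B. 0 \<le> A \<longrightarrow> 0 \<le> B \<longrightarrow> (1-\<delta>)*(G*A+H*B+1) \<le> Phi p (A+\<alpha>) (B+\<beta>)"
    using scalar_S[OF p1 G(1) H(1) hyp d(1)] by blast
  obtain w1 where w1: "norm w1 = 1" "\<forall>x\<in>fst ` E. \<forall>t\<ge>0. norm (x + t *\<^sub>R w1) \<ge> (1 - \<delta>) * (\<bar>gn x\<bar> + t)"
    using woh_scaled[OF WX norm_hom proj_span(1,2)[OF E(2)] G(3) G(4) d] by blast
  obtain w2 where w2: "norm w2 = 1" "\<forall>y\<in>snd ` E. \<forall>t\<ge>0. norm (y + t *\<^sub>R w2) \<ge> (1 - \<delta>) * (\<bar>hn y\<bar> + t)"
    using woh_scaled[OF WY norm_hom proj_span(3,4)[OF E(2)] H(3) H(4) d] by blast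
  define W where "W = (\<alpha> *\<^sub>R w1, \<beta> *\<^sub>R w2)"
  have NW: "psum_norm p W = 1" using w1 w2 ab by (simp add: W_def psum_Phi)
  have "\<forall>z\<in>E. psum_norm p (z + W) \<ge> (1 - \<epsilon>) * (\<bar>f z\<bar> + psum_norm p W)"
  proof
    fix z assume z: "z \<in> E"
    define x where "x = fst z"
    define y where "y = snd z"
    define A where "A = \<bar>gn x\<bar>"
    define B where "B = \<bar>hn y\<bar>"
    have AB: "0 \<le> A" "0 \<le> B" by (simp_all add: A_def B_def)
    have xE: "x \<in> fst ` E" using z by (simp add: x_def)
    have yE: "y \<in> snd ` E" using z by (simp add: y_def)
    have h1: "norm (x + \<alpha> *\<^sub>R w1) \<ge> (1 - \<delta>) * (A + \<alpha>)" using bspec[OF w1(2) xE] ab(1) unfolding A_def by blast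
    have h2: "norm (y + \<beta> *\<^sub>R w2) \<ge> (1 - \<delta>) * (B + \<beta>)" using bspec[OF w2(2) yE] ab(2) unfolding B_def by blast
    have "psum_norm p (z + W) = Phi p (norm (x + \<alpha> *\<^sub>R w1)) (norm (y + \<beta> *\<^sub>R w2))"
      by (simp add: psum_Phi W_def x_def y_def)
    also have "\<dots> \<ge> Phi p ((1 - \<delta>) * (A + \<alpha>)) ((1 - \<delta>) * (B + \<beta>))"
      using h1 h2 d AB ab by (intro Phi_mono[OF p1]) auto
    also have "Phi p ((1 - \<delta>) * (A + \<alpha>)) ((1 - \<delta>) * (B + \<beta>)) = (1 - \<delta>) * Phi p (A + \<alpha>) (B + \<beta>)"
      using d AB ab by (intro Phi_hom[OF p1]) auto
    finally have h3: "psum_norm p (z + W) \<ge> (1 - \<delta>) * Phi p (A + \<alpha>) (B + \<beta>)" .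
    have "(1 - \<delta>) * ((1-\<delta>)*(G*A+H*B+1)) \<le> (1 - \<delta>) * Phi p (A + \<alpha>) (B + \<beta>)"
      using ab(4) AB d by (intro mult_left_mono) auto
    with h3 have h4: "psum_norm p (z + W) \<ge> (1 - \<delta>) * ((1-\<delta>)*(G*A+H*B+1))" by linarith
    have fz: "\<bar>f z\<bar> \<le> G*A + H*B"
    proof -
      have "\<bar>f z\<bar> \<le> \<bar>g x\<bar> + \<bar>h y\<bar>" using fgh[of z] unfolding x_def y_def by (metis abs_triangle_ineq)
      then show ?thesis using G(5) H(5) unfolding A_def B_def by metis
    qed
    have "(1 - \<epsilon>) * (\<bar>f z\<bar> + 1) \<le> (1 - \<epsilon>) * (G*A + H*B + 1)"
      using fz e by (intro mult_left_mono) auto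
    also have "\<dots> \<le> (1 - \<delta>) * ((1-\<delta>)*(G*A+H*B+1))"
    proof -
      have "1 - \<epsilon> \<le> (1 - \<delta>) * (1 - \<delta>)" using e by (simp add: \<delta>_def algebra_simps)
      moreover have "0 \<le> G*A + H*B + 1" using AB G H by simp
      ultimately show ?thesis by (metis mult.assoc mult_right_mono)
    qed
    finally show "psum_norm p (z + W) \<ge> (1 - \<epsilon>) * (\<bar>f z\<bar> + psum_norm p W)" using h4 NW by simp
  qed
  then show "\<exists>w. psum_norm p w = 1 \<and> (\<forall>z\<in>E. psum_norm p (z + w) \<ge> (1 - \<epsilon>) * (\<bar>f z\<bar> + psum_norm p w))"
    using NW by blast
qed




lemma part_c:
  assumes p: "1 < p"
    and WZ: "weakly_octahedral_wrt (psum_norm p :: 'a::real_normed_vector \<times> 'b::real_normed_vector \<Rightarrow> real)"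
    and nX: "\<exists>x::'a. x \<noteq> 0"
  shows "weakly_octahedral_wrt (norm :: 'a \<Rightarrow> real)"
proof (rule woh_intro)
  have p1: "p \<ge> 1" using p by simp
  fix E :: "'a set" and g :: "'a \<Rightarrow> real" and \<epsilon> :: real
  assume E: "subspace E" "\<exists>F. finite F \<and> E = span F" and lg: "linear g"
    and gb: "\<forall>x. \<bar>g x\<bar> \<le> norm x" and e: "0 < \<epsilon>" "\<epsilon> < 1"
  obtain G gn where G: "0 \<le> G" "G \<le> 1" "linear gn" "\<forall>x. \<bar>gn x\<bar> \<le> norm x"
     "\<forall>x. \<bar>g x\<bar> = G * \<bar>gn x\<bar>" "\<forall>\<eta>>0. \<exists>x. norm x = 1 \<and> gn x > 1 - \<eta>"
    using dualnorm[OF nX lg gb] by blast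
  have ggn: "\<And>x. \<bar>g x\<bar> \<le> \<bar>gn x\<bar>"
  proof -
    fix x have "G * \<bar>gn x\<bar> \<le> 1 * \<bar>gn x\<bar>" using G(2) by (intro mult_right_mono) auto
    then show "\<bar>g x\<bar> \<le> \<bar>gn x\<bar>" using G(5) by simp
  qed
  define \<rho> where "\<rho> = \<epsilon> / 4"
  have rho: "\<rho> > 0" using e by (simp add: \<rho>_def)
  obtain K where K: "K \<ge> 1" and KP: "\<And>A B R. 0 \<le> A \<Longrightarrow> 0 \<le> B \<Longrightarrow> R \<ge> K * B \<Longrightarrow> Phi p A B \<ge> R \<Longrightarrow> A \<ge> R - \<rho> * B"
    using Phi_P[OF p rho] by blast
  define \<eta> where "\<eta> = min (1/4) (\<epsilon> / (16 * K))"
  have eta: "0 < \<eta>" "\<eta> \<le> 1/4" "\<eta> * K \<le> \<epsilon> / 16" "\<eta> \<le> \<epsilon> / 16"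
  proof -
    show "0 < \<eta>" "\<eta> \<le> 1/4" using e K by (auto simp: \<eta>_def)
    have "\<eta> \<le> \<epsilon> / (16 * K)" by (simp add: \<eta>_def)
    then have "\<eta> * K \<le> \<epsilon> / (16 * K) * K" using K by (intro mult_right_mono) auto
    also have "\<dots> = \<epsilon> / 16" using K by (simp add: field_simps)
    finally show "\<eta> * K \<le> \<epsilon> / 16" .
    have "\<eta> \<le> \<eta> * K" using K \<open>0 < \<eta>\<close> by simp
    then show "\<eta> \<le> \<epsilon> / 16" using \<open>\<eta> * K \<le> \<epsilon> / 16\<close> by linarith
  qed
  have eta1: "\<eta> < 1" using eta by simp
  obtain x0 where x0: "norm x0 = 1" "gn x0 > 1 - \<eta>" using G(6) eta(1) by blast
  obtain F where F: "finite F" "E = span F" using E(2) by blast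
  define E2 where "E2 = span (insert x0 F)"
  define E' where "E' = span ((\<lambda>x. (x, 0::'b)) ` insert x0 F)"
  have E'eq: "E' = (\<lambda>x. (x, 0::'b)) ` E2" unfolding E'_def E2_def by (rule span_linear_image[OF lin_inl])
  have EE2: "E \<subseteq> E2" unfolding F(2) E2_def by (rule span_mono) auto
  have x0E2: "x0 \<in> E2" unfolding E2_def by (rule span_base) simp
  define f' where "f' z = gn (fst z)" for z :: "'a \<times> 'b"
  have lf': "linear f'" unfolding f'_def[abs_def] using linear_compose[OF linear_fst G(3)] by (simp add: o_def)
  have fb': "\<forall>z. \<bar>f' z\<bar> \<le> psum_norm p z"
  proof
    fix z :: "'a \<times> 'b"
    show "\<bar>f' z\<bar> \<le> psum_norm p z" using G(4) psum_ge(1)[OF p1, of z] unfolding f'_def by (metis order_trans)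
  qed
  have E'sp: "subspace E'" "\<exists>F. finite F \<and> E' = span F"
    unfolding E'_def using F(1) by (auto intro!: subspace_span exI[of _ "(\<lambda>x. (x, 0::'b)) ` insert x0 F"])
  obtain W where NW: "psum_norm p W = 1"
    and HW: "\<forall>z\<in>E'. \<forall>t\<ge>0. psum_norm p (z + t *\<^sub>R W) \<ge> (1 - \<eta>) * (\<bar>f' z\<bar> + t)"
    using woh_scaled[OF WZ psum_hom[OF p1] E'sp lf' fb' eta(1) eta1] by blast
  define u where "u = fst W"
  define v where "v = snd W"
  have nv: "norm v \<le> 1" using psum_ge(2)[OF p1, of W] NW by (simp add: v_def)
  have nu: "norm u \<le> 1" using psum_ge(1)[OF p1, of W] NW by (simp add: u_def)
  have main: "\<And>x t. x \<in> E \<Longrightarrow> t > 0 \<Longrightarrow> norm (x + t *\<^sub>R u) \<ge> (1 - \<epsilon>) * (\<bar>gn x\<bar> + t)"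
  proof -
    fix x and t :: real assume x: "x \<in> E" and t: "t > 0"
    define \<sigma> :: real where "\<sigma> = (if gn x \<ge> 0 then 1 else -1)"
    define s where "s = 2 * K * t"
    have s0: "s \<ge> 0" using K t by (simp add: s_def)
    define x' where "x' = x + (\<sigma> * s) *\<^sub>R x0"
    have x'E2: "x' \<in> E2" unfolding x'_def E2_def
      using EE2 x x0E2 unfolding E2_def by (intro span_add span_scale) auto
    have gx': "\<bar>gn x'\<bar> \<ge> \<bar>gn x\<bar> + s * (1 - \<eta>)"
    proof -
      have gx: "gn x' = gn x + \<sigma> * s * gn x0" using G(3) by (simp add: x'_def linear_add linear_scale)
      have "s * (1 - \<eta>) \<le> s * gn x0" using s0 x0 by (intro mult_left_mono) auto
      then show ?thesis using gx by (cases "gn x \<ge> 0") (auto simp: \<sigma>_def)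
    qed
    have zE': "(x', 0::'b) \<in> E'" unfolding E'eq using x'E2 by blast
    have HWx: "psum_norm p ((x', 0) + t *\<^sub>R W) \<ge> (1 - \<eta>) * (\<bar>gn x'\<bar> + t)"
      using HW zE' t unfolding f'_def by force
    have Peq: "psum_norm p ((x', 0) + t *\<^sub>R W) = Phi p (norm (x' + t *\<^sub>R u)) (t * norm v)"
      using t by (simp add: psum_Phi u_def v_def)
    define R where "R = (1 - \<eta>) * (\<bar>gn x'\<bar> + t)"
    have PR: "Phi p (norm (x' + t *\<^sub>R u)) (t * norm v) \<ge> R" using HWx Peq by (simp add: R_def)
    have R1: "R \<ge> (1 - \<eta>) * (\<bar>gn x\<bar> + s * (1 - \<eta>) + t)"
      unfolding R_def using gx' eta by (intro mult_left_mono) auto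
    have "(1 - \<eta>) * (1 - \<eta>) \<ge> (3/4) * (3/4)" using eta by (intro mult_mono) auto
    then have "(1 - \<eta>) * (1 - \<eta>) \<ge> 1/2" by simp
    then have "s * ((1 - \<eta>) * (1 - \<eta>)) \<ge> s * (1/2)" using s0 by (intro mult_left_mono) auto
    moreover have "(1 - \<eta>) * (\<bar>gn x\<bar> + s * (1 - \<eta>) + t) \<ge> (1 - \<eta>) * (s * (1 - \<eta>))"
      using eta t by (intro mult_left_mono) auto
    ultimately have "R \<ge> K * t" using R1 by (simp add: s_def algebra_simps)
    moreover have "K * t \<ge> K * (t * norm v)" using K t nv by (intro mult_left_mono) (auto simp: mult_left_le_one_le)
    ultimately have RK: "R \<ge> K * (t * norm v)" by linarith
    have A1: "norm (x' + t *\<^sub>R u) \<ge> R - \<rho> * (t * norm v)" using KP[OF _ _ RK PR] t by simp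
    have "\<rho> * (t * norm v) \<le> \<rho> * t" using rho t nv by (intro mult_left_mono) (auto simp: mult_left_le_one_le)
    with A1 have A2: "norm (x' + t *\<^sub>R u) \<ge> R - \<rho> * t" by linarith
    have "norm (x' + t *\<^sub>R u) \<le> norm (x + t *\<^sub>R u) + norm ((\<sigma> * s) *\<^sub>R x0)"
    proof -
      have "x' + t *\<^sub>R u = (x + t *\<^sub>R u) + (\<sigma> * s) *\<^sub>R x0" by (simp add: x'_def algebra_simps)
      then show ?thesis by (metis norm_triangle_ineq)
    qed
    moreover have "norm ((\<sigma> * s) *\<^sub>R x0) = s" using x0 s0 by (simp add: \<sigma>_def abs_mult)
    ultimately have A3: "norm (x + t *\<^sub>R u) \<ge> R - \<rho> * t - s" using A2 by linarith
    define A where "A = \<bar>gn x\<bar>"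
    have A0: "A \<ge> 0" by (simp add: A_def)
    have R2: "R \<ge> (1 - \<eta>) * (A + t) + s * ((1 - \<eta>) * (1 - \<eta>))" using R1 by (simp add: A_def algebra_simps)
    have l1: "s * (1 - (1 - \<eta>) * (1 - \<eta>)) \<le> \<epsilon> * t / 4"
    proof -
      have "1 - (1 - \<eta>) * (1 - \<eta>) \<le> 2 * \<eta>" using eta by (simp add: algebra_simps)
      then have "s * (1 - (1 - \<eta>) * (1 - \<eta>)) \<le> s * (2 * \<eta>)" using s0 by (intro mult_left_mono) auto
      also have "s * (2 * \<eta>) = 4 * t * (\<eta> * K)" by (simp add: s_def algebra_simps)
      also have "\<dots> \<le> 4 * t * (\<epsilon> / 16)" using eta t by (intro mult_left_mono) auto
      finally show ?thesis by simp
    qed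
    have l2: "(\<epsilon> - \<eta>) * (A + t) \<ge> \<epsilon> * t / 2"
    proof -
      have "\<epsilon> - \<eta> \<ge> \<epsilon> / 2" using eta e by simp
      then have "(\<epsilon> - \<eta>) * (A + t) \<ge> (\<epsilon> / 2) * (A + t)" using A0 t by (intro mult_right_mono) auto
      moreover have "(\<epsilon> / 2) * (A + t) \<ge> (\<epsilon> / 2) * t" using A0 e by (intro mult_left_mono) auto
      ultimately show ?thesis by simp
    qed
    have "norm (x + t *\<^sub>R u) \<ge> (1 - \<eta>) * (A + t) + s * ((1 - \<eta>) * (1 - \<eta>)) - \<rho> * t - s"
      using A3 R2 by linarith
    moreover have "(1 - \<eta>) * (A + t) + s * ((1 - \<eta>) * (1 - \<eta>)) - \<rho> * t - s
        = (1 - \<epsilon>) * (A + t) + (\<epsilon> - \<eta>) * (A + t) - \<rho> * t - s * (1 - (1 - \<eta>) * (1 - \<eta>))"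
      by (simp add: algebra_simps)
    ultimately show "norm (x + t *\<^sub>R u) \<ge> (1 - \<epsilon>) * (\<bar>gn x\<bar> + t)"
      using l1 l2 unfolding A_def \<rho>_def by linarith
  qed
  have "norm (0 + 1 *\<^sub>R u) \<ge> (1 - \<epsilon>) * (\<bar>gn 0\<bar> + 1)" using main[of 0 1] E(1) by (simp add: subspace_0)
  then have nu0: "norm u \<ge> 1 - \<epsilon>" using G(3) by (simp add: linear_0)
  then have nup: "norm u > 0" using e by linarith
  define w where "w = (1 / norm u) *\<^sub>R u"
  have nw: "norm w = 1" using nup by (simp add: w_def)
  have "\<forall>x\<in>E. norm (x + w) \<ge> (1 - \<epsilon>) * (\<bar>g x\<bar> + norm w)"
  proof
    fix x assume x: "x \<in> E"
    have inv1: "1 / norm u \<ge> 1" using nup nu by simp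
    have "norm (x + w) \<ge> (1 - \<epsilon>) * (\<bar>gn x\<bar> + 1 / norm u)"
      using main[OF x, of "1 / norm u"] nup by (simp add: w_def)
    moreover have "(1 - \<epsilon>) * (\<bar>g x\<bar> + 1) \<le> (1 - \<epsilon>) * (\<bar>gn x\<bar> + 1 / norm u)"
      using e inv1 ggn[of x] by (intro mult_left_mono) auto
    ultimately show "norm (x + w) \<ge> (1 - \<epsilon>) * (\<bar>g x\<bar> + norm w)" using nw by simp
  qed
  then show "\<exists>w. norm w = 1 \<and> (\<forall>z\<in>E. norm (z + w) \<ge> (1 - \<epsilon>) * (\<bar>g z\<bar> + norm w))"
    using nw by blast
qed



theorem proposition4p5:
  assumes "\<exists>x::'a::banach. x \<noteq> 0" and "\<exists>y::'b::banach. y \<noteq> 0"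
  shows "(weakly_octahedral_wrt (norm :: 'a \<Rightarrow> real) \<longrightarrow>
            weakly_octahedral_wrt (psum_norm 1 :: 'a \<times> 'b \<Rightarrow> real))
       \<and> (\<forall>p::ereal. 1 < p \<and> weakly_octahedral_wrt (norm :: 'a \<Rightarrow> real)
                      \<and> weakly_octahedral_wrt (norm :: 'b \<Rightarrow> real) \<longrightarrow>
            weakly_octahedral_wrt (psum_norm p :: 'a \<times> 'b \<Rightarrow> real))
       \<and> (\<forall>p::ereal. 1 < p \<and> weakly_octahedral_wrt (psum_norm p :: 'a \<times> 'b \<Rightarrow> real) \<longrightarrow>
            weakly_octahedral_wrt (norm :: 'a \<Rightarrow> real))"
  using part_a[where 'a='a and 'b='b] part_b[OF _ _ _ assms] part_c[OF _ _ assms(1)] by blast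

end
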